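(* Let $X$ be a topological space, $\mathcal{C}$ the set of its closed sets, and $\mathcal{A}\subseteq\mathcal{C}$. The following are equivalent: (i) the crisp context $(X,\mathcal{A},\in)$ is a reduct of $(X,\mathcal{C},\in)$ in FCA; (ii) the crisp context $(X,\mathcal{A},\notin)$ is a reduct of $(X,\mathcal{C},\notin)$ in RST; (iii) $\mathcal{A}$ is a base for the closed sets of $X$, i.e. every $C\in\mathcal{C}$ equals $\bigcap\mathcal{A}'$ for some $\mathcal{A}'\subseteq\mathcal{A}$ (with $\bigcap\emptyset=X$).
   Context: Crisp contexts are $L$-contexts for $L=\{0,1\}$ with $*=\wedge$; a context is a triple $(X,Y,R)$ with $R\subseteq X\times Y$, and subsets are identified with $\{0,1\}$-valued maps. $(X,\mathcal{C},\in)$ has relation $\{(x,C)\mid x\in C\}$ and $\notin$ is its complement. For $U\subseteq X$, $V\subseteq Y$: $R^\uparrow U=\{y\mid\forall x\in U,(x,y)\in R\}$, $R^\downarrow V=\{x\mid\forall y\in V,(x,y)\in R\}$, $R^\exists U=\{y\mid\exists x\in U,(x,y)\in R\}$, $R^\forall V=\{x\mid\forall y,(x,y)\in R\Rightarrow y\in V\}$. $\mathcal{M}R=\{U\mid R^\downarrow R^\uparrow U=U\}$, $\mathcal{K}R=\{U\mid R^\forall R^\exists U=U\}$. For $X'\subseteq X$, $Y'\subseteq Y$, $R_{X',Y'}=R\cap(X'\times Y')$. $(X',Y',R_{X',Y'})$ is a reduct of $(X,Y,R)$ in FCA if the map $\mathcal{M}R_{X',Y'}\to\mathcal{M}R$,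 $U'\mapsto R^\downarrow R^\uparrow U'$, is an order isomorphism (for inclusion); it is a reduct in RST if the map $\mathcal{K}R_{X',Y'}\to\mathcal{K}R$, $U'\mapsto R^\forall R^\exists U'$, is an order isomorphism. *)

theory Defs
  imports "HOL-Analysis.Analysis"
begin

definition up_op :: "'a set \<Rightarrow> 'b set \<Rightarrow> ('a \<times> 'b) set \<Rightarrow> 'a set \<Rightarrow> 'b set" where
  "up_op X Y R U = {y \<in> Y. \<forall>x\<in>U. (x, y) \<in> R}"

definition down_op :: "'a set \<Rightarrow> 'b set \<Rightarrow> ('a \<times> 'b) set \<Rightarrow> 'b set \<Rightarrow> 'a set" where
  "down_op X Y R V = {x \<in> X. \<forall>y\<in>V. (x, y) \<in> R}"

definition ex_op :: "'a set \<Rightarrow> 'b set \<Rightarrow> ('a \<times> 'b) set \<Rightarrow> 'a set \<Rightarrow> 'b set" where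
  "ex_op X Y R U = {y \<in> Y. \<exists>x\<in>U. (x, y) \<in> R}"

definition all_op :: "'a set \<Rightarrow> 'b set \<Rightarrow> ('a \<times> 'b) set \<Rightarrow> 'b set \<Rightarrow> 'a set" where
  "all_op X Y R V = {x \<in> X. \<forall>y\<in>Y. (x, y) \<in> R \<longrightarrow> y \<in> V}"

definition M_sys :: "'a set \<Rightarrow> 'b set \<Rightarrow> ('a \<times> 'b) set \<Rightarrow> 'a set set" where
  "M_sys X Y R = {U. U \<subseteq> X \<and> down_op X Y R (up_op X Y R U) = U}"

definition K_sys :: "'a set \<Rightarrow> 'b set \<Rightarrow> ('a \<times> 'b) set \<Rightarrow> 'a set set" where
  "K_sys X Y R = {U. U \<subseteq> X \<and> all_op X Y R (ex_op X Y R U) = U}"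

definition order_iso_on :: "'c set set \<Rightarrow> 'c set set \<Rightarrow> ('c set \<Rightarrow> 'c set) \<Rightarrow> bool" where
  "order_iso_on A B f \<longleftrightarrow> bij_betw f A B \<and> (\<forall>U\<in>A. \<forall>V\<in>A. U \<subseteq> V \<longleftrightarrow> f U \<subseteq> f V)"

definition restr :: "('a \<times> 'b) set \<Rightarrow> 'a set \<Rightarrow> 'b set \<Rightarrow> ('a \<times> 'b) set" where
  "restr R X' Y' = R \<inter> (X' \<times> Y')"

definition reduct_FCA :: "'a set \<Rightarrow> 'b set \<Rightarrow> ('a \<times> 'b) set \<Rightarrow> 'a set \<Rightarrow> 'b set \<Rightarrow> bool" where
  "reduct_FCA X Y R X' Y' \<longleftrightarrow> X' \<subseteq> X \<and> Y' \<subseteq> Y \<and>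
     order_iso_on (M_sys X' Y' (restr R X' Y')) (M_sys X Y R)
       (\<lambda>U'. down_op X Y R (up_op X Y R U'))"

definition reduct_RST :: "'a set \<Rightarrow> 'b set \<Rightarrow> ('a \<times> 'b) set \<Rightarrow> 'a set \<Rightarrow> 'b set \<Rightarrow> bool" where
  "reduct_RST X Y R X' Y' \<longleftrightarrow> X' \<subseteq> X \<and> Y' \<subseteq> Y \<and>
     order_iso_on (K_sys X' Y' (restr R X' Y')) (K_sys X Y R)
       (\<lambda>U'. all_op X Y R (ex_op X Y R U'))"

definition mem_rel :: "'a set \<Rightarrow> 'a set set \<Rightarrow> ('a \<times> 'a set) set" where
  "mem_rel X C = {(x, c). x \<in> X \<and> c \<in> C \<and> x \<in> c}"

definition nmem_rel :: "'a set \<Rightarrow> 'a set set \<Rightarrow> ('a \<times> 'a set) set" where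
  "nmem_rel X C = {(x, c). x \<in> X \<and> c \<in> C \<and> x \<notin> c}"

end

theory Submission
  imports Defs
begin

definition clA :: "'a set \<Rightarrow> 'a set set \<Rightarrow> 'a set \<Rightarrow> 'a set" where
  "clA X A U = X \<inter> \<Inter>{a\<in>A. U \<subseteq> a}"

definition FA :: "'a set \<Rightarrow> 'a set set \<Rightarrow> 'a set set" where
  "FA X A = {U. U \<subseteq> X \<and> clA X A U = U}"

lemma fca_cl: "U \<subseteq> X \<Longrightarrow> down_op X A (mem_rel X A) (up_op X A (mem_rel X A) U) = clA X A U"
  unfolding down_op_def up_op_def mem_rel_def clA_def by auto

lemma rst_cl: "U \<subseteq> X \<Longrightarrow> all_op X A (nmem_rel X A) (ex_op X A (nmem_rel X A) U) = clA X A U"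
  unfolding all_op_def ex_op_def nmem_rel_def clA_def by (rule set_eqI) (simp, blast)

lemma M_FA: "M_sys X A (mem_rel X A) = FA X A"
  unfolding M_sys_def FA_def using fca_cl by blast

lemma K_FA: "K_sys X A (nmem_rel X A) = FA X A"
  unfolding K_sys_def FA_def using rst_cl by blast

lemma restr_mem: "A \<subseteq> C \<Longrightarrow> restr (mem_rel X C) X A = mem_rel X A"
  unfolding restr_def mem_rel_def by auto

lemma restr_nmem: "A \<subseteq> C \<Longrightarrow> restr (nmem_rel X C) X A = nmem_rel X A"
  unfolding restr_def nmem_rel_def by auto

lemma order_iso_cong:
  assumes "\<And>U. U \<in> A \<Longrightarrow> f U = g U"
  shows "order_iso_on A B f \<longleftrightarrow> order_iso_on A B g"
  unfolding order_iso_on_def using assms bij_betw_cong[of A f g B] by auto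

lemma FA_sub: "U \<in> FA X A \<Longrightarrow> U \<subseteq> X"
  unfolding FA_def by auto

theorem mainTheorem10:
  fixes T :: "'a topology" and \<A> :: "'a set set"
  defines "X \<equiv> topspace T" and "\<C> \<equiv> {C. closedin T C}"
  assumes "\<A> \<subseteq> \<C>"
  shows "(reduct_FCA X \<C> (mem_rel X \<C>) X \<A> \<longleftrightarrow> reduct_RST X \<C> (nmem_rel X \<C>) X \<A>)
       \<and> (reduct_RST X \<C> (nmem_rel X \<C>) X \<A> \<longleftrightarrow>
            (\<forall>C\<in>\<C>. \<exists>\<A>'\<subseteq>\<A>. C = X \<inter> \<Inter>\<A>'))"
proof -
  have Xc: "X \<in> \<C>" unfolding X_def \<C>_def by simp
  have sub: "\<A> \<subseteq> Pow X" using assms(3) closedin_subset unfolding \<C>_def X_def by auto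
  have clclosedB: "clA X B U \<in> \<C>" if B: "B \<subseteq> \<C>" for U B
  proof -
    have "closedin T (\<Inter>(insert (topspace T) {a\<in>B. U \<subseteq> a}))"
      using B unfolding \<C>_def
      by (intro closedin_Inter) auto
    then have "closedin T (topspace T \<inter> \<Inter>{a\<in>B. U \<subseteq> a})" by simp
    then show ?thesis unfolding clA_def \<C>_def X_def by simp
  qed
  note clclosed = clclosedB[OF assms(3)]
  have FC: "FA X \<C> = \<C>"
  proof
    show "FA X \<C> \<subseteq> \<C>" 
    proof
      fix U assume "U \<in> FA X \<C>"
      then have "U = clA X \<C> U" unfolding FA_def by simp
      also have "\<dots> \<in> \<C>" by (rule clclosedB) simp
      finally show "U \<in> \<C>" .
    qed
    show "\<C> \<subseteq> FA X \<C>"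
    proof
      fix U assume U: "U \<in> \<C>"
      then have "U \<subseteq> X" unfolding \<C>_def X_def using closedin_subset by auto
      moreover have "clA X \<C> U = U" using U \<open>U \<subseteq> X\<close> unfolding clA_def by auto
      ultimately show "U \<in> FA X \<C>" unfolding FA_def by auto
    qed
  qed
  have FAsub: "FA X \<A> \<subseteq> \<C>"

  proof
    fix U assume "U \<in> FA X \<A>"
    then have "U = clA X \<A> U" unfolding FA_def by simp
    also have "\<dots> \<in> \<C>" by (rule clclosed)
    finally show "U \<in> \<C>" .
  qed
  have idC: "clA X \<C> U = U" if "U \<in> FA X \<A>" for U
    using FAsub FC that unfolding FA_def by auto
  have iso: "order_iso_on (FA X \<A>) (FA X \<C>) (clA X \<C>) \<longleftrightarrow> FA X \<A> = \<C>"
  proof -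
    have "order_iso_on (FA X \<A>) (FA X \<C>) (clA X \<C>) \<longleftrightarrow> order_iso_on (FA X \<A>) (FA X \<C>) id"
      using idC by (intro order_iso_cong) auto
    also have "\<dots> \<longleftrightarrow> FA X \<A> = \<C>"
      unfolding order_iso_on_def FC by (auto simp: bij_betw_def)
    finally show ?thesis .
  qed
  have r1: "reduct_FCA X \<C> (mem_rel X \<C>) X \<A> \<longleftrightarrow> FA X \<A> = \<C>"
  proof -
    have "reduct_FCA X \<C> (mem_rel X \<C>) X \<A> \<longleftrightarrow> order_iso_on (FA X \<A>) (FA X \<C>) (clA X \<C>)"
    proof -
      have e: "order_iso_on (FA X \<A>) (FA X \<C>) (\<lambda>U'. down_op X \<C> (mem_rel X \<C>) (up_op X \<C> (mem_rel X \<C>) U')) \<longleftrightarrow> order_iso_on (FA X \<A>) (FA X \<C>) (clA X \<C>)"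
        by (rule order_iso_cong) (rule fca_cl, erule FA_sub)
      show ?thesis unfolding reduct_FCA_def restr_mem[OF assms(3)] M_FA using e assms(3) by simp
    qed
    then show ?thesis using iso by simp
  qed
  have r2: "reduct_RST X \<C> (nmem_rel X \<C>) X \<A> \<longleftrightarrow> FA X \<A> = \<C>"
  proof -
    have "reduct_RST X \<C> (nmem_rel X \<C>) X \<A> \<longleftrightarrow> order_iso_on (FA X \<A>) (FA X \<C>) (clA X \<C>)"
    proof -
      have e: "order_iso_on (FA X \<A>) (FA X \<C>) (\<lambda>U'. all_op X \<C> (nmem_rel X \<C>) (ex_op X \<C> (nmem_rel X \<C>) U')) \<longleftrightarrow> order_iso_on (FA X \<A>) (FA X \<C>) (clA X \<C>)"
        by (rule order_iso_cong) (rule rst_cl, erule FA_sub)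
      show ?thesis unfolding reduct_RST_def restr_nmem[OF assms(3)] K_FA using e assms(3) by simp
    qed
    then show ?thesis using iso by simp
  qed
  have r3: "FA X \<A> = \<C> \<longleftrightarrow> (\<forall>C\<in>\<C>. \<exists>\<A>'\<subseteq>\<A>. C = X \<inter> \<Inter>\<A>')"
  proof
    assume h: "FA X \<A> = \<C>"
    show "\<forall>C\<in>\<C>. \<exists>\<A>'\<subseteq>\<A>. C = X \<inter> \<Inter>\<A>'"
    proof
      fix C assume "C \<in> \<C>"
      then have "C \<in> FA X \<A>" using h by simp
      then have "C = X \<inter> \<Inter>{a\<in>\<A>. C \<subseteq> a}" unfolding FA_def clA_def by auto
      moreover have "{a\<in>\<A>. C \<subseteq> a} \<subseteq> \<A>" by auto
      ultimately show "\<exists>\<A>'\<subseteq>\<A>. C = X \<inter> \<Inter>\<A>'" by (intro exI[of _ "{a\<in>\<A>. C \<subseteq> a}"]) simp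
    qed
  next
    assume h: "\<forall>C\<in>\<C>. \<exists>\<A>'\<subseteq>\<A>. C = X \<inter> \<Inter>\<A>'"
    show "FA X \<A> = \<C>"
    proof
      show "FA X \<A> \<subseteq> \<C>" by (rule FAsub)
      show "\<C> \<subseteq> FA X \<A>"
      proof
        fix C assume C: "C \<in> \<C>"
        have "\<exists>\<A>'\<subseteq>\<A>. C = X \<inter> \<Inter>\<A>'" using h C by (rule bspec)
        then obtain A' where A': "A' \<subseteq> \<A>" "C = X \<inter> \<Inter>A'" by (elim exE conjE)
        have "C \<subseteq> X" by (subst A'(2)) (rule Int_lower1)
        moreover have "clA X \<A> C = C"
        proof
          show "C \<subseteq> clA X \<A> C" using \<open>C \<subseteq> X\<close> unfolding clA_def by auto
          have "\<forall>a\<in>A'. C \<subseteq> a" by (subst A'(2)) blast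
          then have "A' \<subseteq> {a\<in>\<A>. C \<subseteq> a}" using A'(1) by blast
          then have "\<Inter>{a\<in>\<A>. C \<subseteq> a} \<subseteq> \<Inter>A'" by (rule Inter_anti_mono)
          then have "clA X \<A> C \<subseteq> X \<inter> \<Inter>A'" unfolding clA_def by blast
          also have "\<dots> = C" using A'(2) by simp
          finally show "clA X \<A> C \<subseteq> C" .
        qed
        ultimately show "C \<in> FA X \<A>" unfolding FA_def by auto
      qed
    qed
  qed
  show ?thesis using r1 r2 r3 by simp
qed

end
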